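(* Let $d\ge 1$, let $J:\mathbb{R}^d\to[0,\infty)$ be radially symmetric with $\int_{\mathbb{R}^d}J(x)\,{\rm d}x=1$, and let $F:[0,\infty)\to[0,\infty)$ be convex, of class $C^1$, with $F(0)=0$ and $\int^\infty\frac{{\rm d}u}{F(u)}<\infty$. Consider the Cauchy problem $$u_t=J\ast u-u+F(u),\quad x\in\mathbb{R}^d,\ t>0,\qquad u(x,0)=u_0(x)\ge 0.$$ Let $h(w)=\int_w^\infty\frac{{\rm d}u}{F(u)}$ (a decreasing function with $h(0)=\infty$, $h(\infty)=0$) and let $h^{-1}$ be its inverse. For $T>0$ and a solution $u$ define, for $t\in[0,T)$, $$W_T(t)=\int_{\mathbb{R}^d}k_{T-t}(x)\,u(x,t)\,{\rm d}x,$$ where $k_s$ is the kernel defined below. Suppose $u_0\ge 0$ satisfies, for some $T>0$, $$\frac{W_T(0)}{h^{-1}(T)}>1,$$ i.e. $\int_{\mathbb{R}^d}k_T(x)u_0(x)\,{\rm d}x>h^{-1}(T)$. Then any local-in-time classical solution $u=u(x,t)$ of this Cauchy problem cannot be continued beyond $t=T$.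
   Context: The operator $\mathcal{A}u=J\ast u-u$ on $L^1(\mathbb{R}^d)$ generates a semigroup of convolution operators ${\rm e}^{t\mathcal{A}}$ whose kernels $k_t\in L^1(\mathbb{R}^d)$, $\int k_t=1$, are given by $k_t=\mathcal{F}^{-1}\big({\rm e}^{t(\widehat J(\xi)-1)}\big)$, where $\mathcal{F}^{-1}$ is the inverse Fourier transform on $\mathbb{R}^d$ and $\widehat J$ is the Fourier transform of $J$. *)

theory Defs
  imports "HOL-Analysis.Analysis"
begin

text \<open>Convolution powers: Jconv J n = J * J * ... * J  (n+1 factors).\<close>
fun Jconv :: "('a::euclidean_space \<Rightarrow> real) \<Rightarrow> nat \<Rightarrow> 'a \<Rightarrow> real" where
  "Jconv J 0 = J"
| "Jconv J (Suc n) = (\<lambda>x. \<integral>y. J (x - y) * Jconv J n y \<partial>lborel)"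

text \<open>The pairing of the kernel k_s = F^{-1}(exp(s(hat J - 1))) with a nonnegative function f:
  since exp(s(hat J - 1)) = exp(-s) * sum_n s^n hat J^n / n!, the kernel is the probability
  measure k_s = exp(-s) (delta_0 + sum_{n>=1} s^n/n! J^{*n}), and
  kint J s f = integral of k_s(x) f(x) dx  (valued in [0,infinity]).\<close>
definition kint :: "('a::euclidean_space \<Rightarrow> real) \<Rightarrow> real \<Rightarrow> ('a \<Rightarrow> real) \<Rightarrow> ennreal" where
  "kint J s f = ennreal (exp (- s)) *
     (ennreal (f 0) + (\<Sum>n. ennreal (s ^ Suc n / fact (Suc n)) *
        (\<integral>\<^sup>+ x. ennreal (Jconv J n x * f x) \<partial>lborel)))"

definition hfun :: "(real \<Rightarrow> real) \<Rightarrow> real \<Rightarrow> ennreal" where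
  "hfun F w = (\<integral>\<^sup>+ u\<in>{w..}. (if F u > 0 then ennreal (1 / F u) else \<infinity>) \<partial>lborel)"

definition hinv :: "(real \<Rightarrow> real) \<Rightarrow> real \<Rightarrow> real" where
  "hinv F T = (THE w. w > 0 \<and> hfun F w = ennreal T)"

definition classical_solution ::
  "('a::euclidean_space \<Rightarrow> real) \<Rightarrow> (real \<Rightarrow> real) \<Rightarrow> ('a \<Rightarrow> real) \<Rightarrow> real \<Rightarrow> ('a \<Rightarrow> real \<Rightarrow> real) \<Rightarrow> bool"
  where
  "classical_solution J F u0 S u \<longleftrightarrow>
     S > 0 \<and>
     (\<forall>x. u x 0 = u0 x) \<and>
     continuous_on (UNIV \<times> {0..<S}) (\<lambda>(x, t). u x t) \<and>
     (\<forall>t'\<in>{0..<S}. bounded ((\<lambda>(x, t). u x t) ` (UNIV \<times> {0..t'}))) \<and>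
     (\<forall>x. \<forall>t\<in>{0..<S}. u x t \<ge> 0) \<and>
     (\<forall>x. \<forall>t\<in>{0<..<S}.
        ((\<lambda>s. u x s) has_real_derivative
           ((\<integral>y. J (x - y) * u y t \<partial>lborel) - u x t + F (u x t))) (at t))"

end

theory Submission
  imports Defs
begin

lemma nn_integral_translate:
  fixes g :: "'a::euclidean_space \<Rightarrow> ennreal"
  assumes "g \<in> borel_measurable borel"
  shows "(\<integral>\<^sup>+x. g (x + c) \<partial>lborel) = (\<integral>\<^sup>+x. g x \<partial>lborel)"
proof -
  have "(\<integral>\<^sup>+x. g x \<partial>lborel) = (\<integral>\<^sup>+x. g x \<partial>distr lborel borel ((+) c))"
    by (simp add: lborel_distr_plus)
  also have "... = (\<integral>\<^sup>+x. g (c + x) \<partial>lborel)"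
    by (subst nn_integral_distr) (auto simp: assms)
  finally show ?thesis by (simp add: add.commute)
qed

locale kern =
  fixes J :: "'a::euclidean_space \<Rightarrow> real"
  assumes J_nonneg: "\<And>x. J x \<ge> 0"
  and J_sym: "\<And>x. J (-x) = J x"
  and J_meas[measurable]: "J \<in> borel_measurable borel"
  and J_one: "(\<integral>\<^sup>+x. ennreal (J x) \<partial>lborel) = 1"
begin

lemma J_shift1: "(\<integral>\<^sup>+x. ennreal (J (x - y)) \<partial>lborel) = 1"
  using nn_integral_translate[of "\<lambda>x. ennreal (J x)" "-y"] J_one by simp

lemma J_swap: "J (y - x) = J (x - y)"
  using J_sym[of "x - y"] by simp

lemma J_shift2: "(\<integral>\<^sup>+x. ennreal (J (y - x)) \<partial>lborel) = 1"
  using J_shift1[of y] by (subst J_swap)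

lemma meas_conv:
  assumes [measurable]: "K \<in> borel_measurable borel"
  shows "(\<lambda>y. \<integral>x. J (y - x) * K x \<partial>lborel) \<in> borel_measurable borel"
proof -
  have "(\<lambda>(y,x). J (y - x) * K x) \<in> borel_measurable (lborel \<Otimes>\<^sub>M lborel)"
    by measurable
  from lborel.borel_measurable_lebesgue_integral[OF this]
  show ?thesis by simp
qed

lemma conv_step:
  assumes [measurable]: "K \<in> borel_measurable borel"
    and Kn: "\<And>x. K x \<ge> 0" and K1: "(\<integral>\<^sup>+x. ennreal (K x) \<partial>lborel) = 1"
  defines "G \<equiv> \<lambda>y. \<integral>x. J (y - x) * K x \<partial>lborel"
  shows "G \<in> borel_measurable borel" "\<And>y. G y \<ge> 0"
    "AE y in lborel. ennreal (G y) = (\<integral>\<^sup>+x. ennreal (J (y - x) * K x) \<partial>lborel)"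
    "(\<integral>\<^sup>+y. ennreal (G y) \<partial>lborel) = 1"
proof -
  show Gm: "G \<in> borel_measurable borel" unfolding G_def by (rule meas_conv) fact
  show "G y \<ge> 0" for y unfolding G_def
    by (intro integral_nonneg_AE) (auto intro!: mult_nonneg_nonneg J_nonneg Kn)
  define I where "I y = (\<integral>\<^sup>+x. ennreal (J (y - x) * K x) \<partial>lborel)" for y
  have Im: "I \<in> borel_measurable borel" unfolding I_def by measurable
  have "(\<integral>\<^sup>+y. I y \<partial>lborel) = (\<integral>\<^sup>+x. (\<integral>\<^sup>+y. ennreal (J (y - x) * K x) \<partial>lborel) \<partial>lborel)"
    unfolding I_def by (rule lborel_pair.Fubini') measurable
  also have "... = (\<integral>\<^sup>+x. ennreal (K x) \<partial>lborel)"
  proof (rule nn_integral_cong)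
    fix x
    have "(\<integral>\<^sup>+y. ennreal (J (y - x) * K x) \<partial>lborel) = (\<integral>\<^sup>+y. ennreal (J (y - x)) * ennreal (K x) \<partial>lborel)"
      by (simp add: ennreal_mult J_nonneg Kn)
    also have "... = (\<integral>\<^sup>+y. ennreal (J (y - x)) \<partial>lborel) * ennreal (K x)"
      by (rule nn_integral_multc) measurable
    also have "... = ennreal (K x)" using J_shift1 by simp
    finally show "(\<integral>\<^sup>+y. ennreal (J (y - x) * K x) \<partial>lborel) = ennreal (K x)" .
  qed
  finally have I1: "(\<integral>\<^sup>+y. I y \<partial>lborel) = 1" using K1 by simp
  then have "AE y in lborel. I y \<noteq> \<infinity>"
    by (intro nn_integral_PInf_AE) (use Im in auto)
  then show AE: "AE y in lborel. ennreal (G y) = I y"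
  proof (rule AE_mp, intro AE_I2 impI)
    fix y assume "I y \<noteq> \<infinity>"
    have "G y = enn2real (I y)" unfolding G_def I_def
      by (rule integral_eq_nn_integral) (auto intro!: mult_nonneg_nonneg J_nonneg Kn)
    then show "ennreal (G y) = I y" using \<open>I y \<noteq> \<infinity>\<close>
      by (simp add: ennreal_enn2real_if)
  qed
  show "(\<integral>\<^sup>+y. ennreal (G y) \<partial>lborel) = 1"
    using nn_integral_cong_AE[OF AE] I1 by simp
qed

lemma Jconv_props:
  "Jconv J n \<in> borel_measurable borel \<and> (\<forall>x. Jconv J n x \<ge> 0) \<and>
   (\<integral>\<^sup>+x. ennreal (Jconv J n x) \<partial>lborel) = 1"
proof (induction n)
  case 0
  then show ?case using J_one J_nonneg by simp
next
  case (Suc n)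
  then have m[measurable]: "Jconv J n \<in> borel_measurable borel" by simp
  from conv_step[of "Jconv J n"] Suc show ?case by simp
qed

declare Jconv.simps(2)[simp del]

lemma Jconv_meas[measurable]: "Jconv J n \<in> borel_measurable borel"
  using Jconv_props by blast

lemma Jconv_nonneg: "Jconv J n x \<ge> 0"
  using Jconv_props by blast

lemma Jconv_one: "(\<integral>\<^sup>+x. ennreal (Jconv J n x) \<partial>lborel) = 1"
  using Jconv_props by blast

lemma Jconv_AE:
  "AE y in lborel. ennreal (Jconv J (Suc n) y) = (\<integral>\<^sup>+x. ennreal (J (y - x) * Jconv J n x) \<partial>lborel)"
  using conv_step(3)[of "Jconv J n", OF Jconv_meas Jconv_nonneg Jconv_one] by (simp add: Jconv.simps(2))

lemma Jconv_int: "integrable lborel (Jconv J n)"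
  by (rule integrableI_nonneg) (auto simp: Jconv_nonneg Jconv_one)

lemma Jconv_integral: "(\<integral>x. Jconv J n x \<partial>lborel) = 1"
  by (subst integral_eq_nn_integral) (auto simp: Jconv_nonneg Jconv_one)

lemma Jconv_mult_int:
  assumes [measurable]: "f \<in> borel_measurable borel" and B: "\<And>x. \<bar>f x\<bar> \<le> B"
  shows "integrable lborel (\<lambda>x. Jconv J n x * f x)"
proof (rule Bochner_Integration.integrable_bound)
  show "integrable lborel (\<lambda>x. B * Jconv J n x)" using Jconv_int by simp
  show "AE x in lborel. norm (Jconv J n x * f x) \<le> norm (B * Jconv J n x)"
  proof (intro AE_I2)
    fix x
    have "\<bar>Jconv J n x * f x\<bar> = Jconv J n x * \<bar>f x\<bar>" using Jconv_nonneg by (simp add: abs_mult)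
    also have "... \<le> Jconv J n x * B" using B Jconv_nonneg by (intro mult_left_mono) auto
    also have "... \<le> \<bar>B * Jconv J n x\<bar>" by (simp add: mult.commute)
    finally show "norm (Jconv J n x * f x) \<le> norm (B * Jconv J n x)" by simp
  qed
qed measurable

end

definition Pk :: "('a::euclidean_space \<Rightarrow> real) \<Rightarrow> nat \<Rightarrow> ('a \<Rightarrow> real) \<Rightarrow> real" where
  "Pk J m f = (case m of 0 \<Rightarrow> f 0 | Suc n \<Rightarrow> \<integral>x. Jconv J n x * f x \<partial>lborel)"

context kern begin

lemma Pk_affine:
  assumes [measurable]: "f \<in> borel_measurable borel" and B: "\<And>x. \<bar>f x\<bar> \<le> B"
  shows "Pk J m (\<lambda>x. a + D * f x) = a + D * Pk J m f"
proof (cases m)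
  case 0 then show ?thesis by (simp add: Pk_def)
next
  case (Suc n)
  have "(\<integral>x. Jconv J n x * (a + D * f x) \<partial>lborel) = (\<integral>x. a * Jconv J n x + D * (Jconv J n x * f x) \<partial>lborel)"
    by (simp add: algebra_simps)
  also have "... = a * (\<integral>x. Jconv J n x \<partial>lborel) + D * (\<integral>x. Jconv J n x * f x \<partial>lborel)"
    using Jconv_int Jconv_mult_int[OF assms] by simp
  finally show ?thesis using Suc by (simp add: Pk_def Jconv_integral)
qed

lemma Pk_const: "Pk J m (\<lambda>x. c) = c"
  using Pk_affine[of "\<lambda>x. 0" 0 m c 0] by simp

lemma Pk_lin3:
  assumes [measurable]: "f \<in> borel_measurable borel" "g \<in> borel_measurable borel" "h \<in> borel_measurable borel"
    and "\<And>x. \<bar>f x\<bar> \<le> B" "\<And>x. \<bar>g x\<bar> \<le> B" "\<And>x. \<bar>h x\<bar> \<le> B"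
  shows "Pk J m (\<lambda>x. f x - g x + h x) = Pk J m f - Pk J m g + Pk J m h"
proof (cases m)
  case 0 then show ?thesis by (simp add: Pk_def)
next
  case (Suc n)
  have "(\<integral>x. Jconv J n x * (f x - g x + h x) \<partial>lborel) = (\<integral>x. Jconv J n x * f x - Jconv J n x * g x + Jconv J n x * h x \<partial>lborel)"
    by (simp add: algebra_simps)
  also have "... = (\<integral>x. Jconv J n x * f x \<partial>lborel) - (\<integral>x. Jconv J n x * g x \<partial>lborel) + (\<integral>x. Jconv J n x * h x \<partial>lborel)"
    using Jconv_mult_int[of f B n] Jconv_mult_int[of g B n] Jconv_mult_int[of h B n] assms by simp
  finally show ?thesis using Suc by (simp add: Pk_def)
qed

lemma Pk_mono:
  assumes [measurable]: "f \<in> borel_measurable borel" "g \<in> borel_measurable borel"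
    and "\<And>x. \<bar>f x\<bar> \<le> B" "\<And>x. \<bar>g x\<bar> \<le> B" and le: "\<And>x. f x \<le> g x"
  shows "Pk J m f \<le> Pk J m g"
proof (cases m)
  case 0 then show ?thesis using le by (simp add: Pk_def)
next
  case (Suc n)
  have "(\<integral>x. Jconv J n x * f x \<partial>lborel) \<le> (\<integral>x. Jconv J n x * g x \<partial>lborel)"
    using Jconv_mult_int[of f B n] Jconv_mult_int[of g B n] assms
    by (intro integral_mono) (auto intro!: mult_left_mono Jconv_nonneg)
  then show ?thesis using Suc by (simp add: Pk_def)
qed

lemma Jf_props:
  assumes [measurable]: "f \<in> borel_measurable borel" and f0: "\<And>x. f x \<ge> 0" and fB: "\<And>x. f x \<le> B"
  shows "(\<lambda>x. \<integral>y. J (x - y) * f y \<partial>lborel) \<in> borel_measurable borel"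
    and "ennreal (\<integral>y. J (x - y) * f y \<partial>lborel) = (\<integral>\<^sup>+y. ennreal (J (x - y) * f y) \<partial>lborel)"
    and "(\<integral>y. J (x - y) * f y \<partial>lborel) \<ge> 0"
    and "(\<integral>y. J (x - y) * f y \<partial>lborel) \<le> B"
proof -
  show "(\<lambda>x. \<integral>y. J (x - y) * f y \<partial>lborel) \<in> borel_measurable borel" by (rule meas_conv) fact
  have B0: "B \<ge> 0" using f0[of 0] fB[of 0] by simp
  have le: "(\<integral>\<^sup>+y. ennreal (J (x - y) * f y) \<partial>lborel) \<le> ennreal B"
  proof -
    have "(\<integral>\<^sup>+y. ennreal (J (x - y) * f y) \<partial>lborel) \<le> (\<integral>\<^sup>+y. ennreal B * ennreal (J (x - y)) \<partial>lborel)"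
      by (intro nn_integral_mono) (auto simp: ennreal_mult'[symmetric] B0 J_nonneg f0 fB mult.commute intro!: ennreal_leI mult_right_mono)
    also have "... = ennreal B * (\<integral>\<^sup>+y. ennreal (J (x - y)) \<partial>lborel)"
      by (rule nn_integral_cmult) measurable
    also have "... = ennreal B" using J_swap J_shift2[of x] by simp
    finally show ?thesis .
  qed
  have eq: "(\<integral>y. J (x - y) * f y \<partial>lborel) = enn2real (\<integral>\<^sup>+y. ennreal (J (x - y) * f y) \<partial>lborel)"
    by (rule integral_eq_nn_integral) (auto intro!: mult_nonneg_nonneg J_nonneg f0)
  show "ennreal (\<integral>y. J (x - y) * f y \<partial>lborel) = (\<integral>\<^sup>+y. ennreal (J (x - y) * f y) \<partial>lborel)"
  proof -
    have "(\<integral>\<^sup>+y. ennreal (J (x - y) * f y) \<partial>lborel) \<noteq> \<infinity>"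
      using order.strict_trans1[OF le ennreal_less_top] by (simp add: less_top)
    then show ?thesis unfolding eq by (simp add: less_top[symmetric])
  qed
  show "(\<integral>y. J (x - y) * f y \<partial>lborel) \<ge> 0" unfolding eq by simp
  show "(\<integral>y. J (x - y) * f y \<partial>lborel) \<le> B" unfolding eq using le B0
    using enn2real_mono[OF le] B0 by simp
qed

lemma Pk_conv:
  assumes [measurable]: "f \<in> borel_measurable borel" and f0: "\<And>x. f x \<ge> 0" and fB: "\<And>x. f x \<le> B"
  shows "Pk J m (\<lambda>x. \<integral>y. J (x - y) * f y \<partial>lborel) = Pk J (Suc m) f"
proof (cases m)
  case 0
  have "J (0 - y) = Jconv J 0 y" for y using J_sym[of y] by simp
  then show ?thesis using 0 by (simp add: Pk_def)
next
  case (Suc n)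
  define Jf where "Jf x = (\<integral>y. J (x - y) * f y \<partial>lborel)" for x
  note JP = Jf_props[OF assms, folded Jf_def]
  have Jfm[measurable]: "Jf \<in> borel_measurable borel" using JP(1) by (simp add: Jf_def[abs_def])
  have B0: "B \<ge> 0" using f0[of 0] fB[of 0] by simp
  have i1: "integrable lborel (\<lambda>x. Jconv J n x * Jf x)"
    by (rule Jconv_mult_int[where B=B]) (use JP in auto)
  have i2: "integrable lborel (\<lambda>x. Jconv J (Suc n) x * f x)"
    by (rule Jconv_mult_int[where B=B]) (use f0 fB in auto)
  have "ennreal (\<integral>x. Jconv J n x * Jf x \<partial>lborel) = (\<integral>\<^sup>+x. ennreal (Jconv J n x * Jf x) \<partial>lborel)"
    by (rule nn_integral_eq_integral[symmetric]) (use i1 JP Jconv_nonneg in auto)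
  also have "... = (\<integral>\<^sup>+x. ennreal (Jconv J n x) * (\<integral>\<^sup>+y. ennreal (J (x - y) * f y) \<partial>lborel) \<partial>lborel)"
    using JP(2,3) Jconv_nonneg by (simp add: ennreal_mult Jf_def)
  also have "... = (\<integral>\<^sup>+x. (\<integral>\<^sup>+y. ennreal (Jconv J n x * (J (x - y) * f y)) \<partial>lborel) \<partial>lborel)"
    by (subst nn_integral_cmult[symmetric]) (auto simp: ennreal_mult Jconv_nonneg J_nonneg f0)
  also have "... = (\<integral>\<^sup>+y. (\<integral>\<^sup>+x. ennreal (Jconv J n x * (J (x - y) * f y)) \<partial>lborel) \<partial>lborel)"
    by (rule lborel_pair.Fubini'[symmetric]) measurable
  also have "... = (\<integral>\<^sup>+y. ennreal (f y) * (\<integral>\<^sup>+x. ennreal (J (y - x) * Jconv J n x) \<partial>lborel) \<partial>lborel)"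
  proof (rule nn_integral_cong)
    fix y
    have "(\<integral>\<^sup>+x. ennreal (Jconv J n x * (J (x - y) * f y)) \<partial>lborel) = (\<integral>\<^sup>+x. ennreal (f y) * ennreal (J (y - x) * Jconv J n x) \<partial>lborel)"
      by (intro nn_integral_cong) (auto simp: ennreal_mult'[symmetric] f0 J_swap[of y] mult_ac)
    also have "... = ennreal (f y) * (\<integral>\<^sup>+x. ennreal (J (y - x) * Jconv J n x) \<partial>lborel)"
      by (rule nn_integral_cmult) measurable
    finally show "(\<integral>\<^sup>+x. ennreal (Jconv J n x * (J (x - y) * f y)) \<partial>lborel) = ennreal (f y) * (\<integral>\<^sup>+x. ennreal (J (y - x) * Jconv J n x) \<partial>lborel)" .
  qed
  also have "... = (\<integral>\<^sup>+y. ennreal (Jconv J (Suc n) y * f y) \<partial>lborel)"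
  proof (rule nn_integral_cong_AE)
    show "AE y in lborel. ennreal (f y) * (\<integral>\<^sup>+x. ennreal (J (y - x) * Jconv J n x) \<partial>lborel) = ennreal (Jconv J (Suc n) y * f y)"
      using Jconv_AE[of n]
    proof eventually_elim
      case (elim y)
      have "ennreal (Jconv J (Suc n) y * f y) = ennreal (f y) * ennreal (Jconv J (Suc n) y)"
        by (metis ennreal_mult' f0 mult.commute)
      then show ?case unfolding elim[symmetric] by (simp only: mult.commute)
    qed
  qed
  also have "... = ennreal (\<integral>y. Jconv J (Suc n) y * f y \<partial>lborel)"
    by (rule nn_integral_eq_integral) (use i2 f0 Jconv_nonneg in auto)
  finally have "ennreal (\<integral>x. Jconv J n x * Jf x \<partial>lborel) = ennreal (\<integral>y. Jconv J (Suc n) y * f y \<partial>lborel)" .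
  moreover have "(\<integral>x. Jconv J n x * Jf x \<partial>lborel) \<ge> 0"
    using JP Jconv_nonneg by (intro integral_nonneg_AE) auto
  moreover have "(\<integral>y. Jconv J (Suc n) y * f y \<partial>lborel) \<ge> 0"
    using f0 Jconv_nonneg by (intro integral_nonneg_AE) auto
  ultimately have "(\<integral>x. Jconv J n x * Jf x \<partial>lborel) = (\<integral>y. Jconv J (Suc n) y * f y \<partial>lborel)"
    by simp
  then show ?thesis using Suc by (simp add: Pk_def Jf_def)
qed

end

locale fct =
  fixes F :: "real \<Rightarrow> real" and F' :: "real \<Rightarrow> real"
  assumes F_nonneg: "\<And>u. u \<ge> 0 \<Longrightarrow> F u \<ge> 0"
    and F_convex: "convex_on {0..} F"
    and F_der: "\<And>u. u \<ge> 0 \<Longrightarrow> (F has_real_derivative F' u) (at u within {0..})"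
    and F'_cont: "continuous_on {0..} F'"
    and F_zero: "F 0 = 0"
begin

lemma F_cont: "continuous_on {0..} F"
  by (rule DERIV_continuous_on) (use F_der in auto)

definition Fc :: "real \<Rightarrow> real" where "Fc u = F (max 0 u)"

lemma Fc_cont: "continuous_on UNIV Fc"
proof -
  have "continuous_on UNIV (F \<circ> (\<lambda>u. max 0 u))"
    by (rule continuous_on_compose) (auto intro!: continuous_intros continuous_on_subset[OF F_cont])
  then show ?thesis by (simp add: Fc_def[abs_def] o_def)
qed

lemma Fc_meas[measurable]: "Fc \<in> borel_measurable borel"
  using Fc_cont by (simp add: borel_measurable_continuous_onI)

definition gc :: "real \<Rightarrow> ennreal" where
  "gc u = (if Fc u > 0 then ennreal (1 / Fc u) else \<infinity>)"

lemma gc_meas[measurable]: "gc \<in> borel_measurable borel"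
  unfolding gc_def by measurable

lemma gc_pos: "gc u > 0"
  by (simp add: gc_def)

lemma gc_ne0: "gc u \<noteq> 0"
  by (simp add: gc_def)

lemma hfun_alt: "w \<ge> 0 \<Longrightarrow> hfun F w = (\<integral>\<^sup>+u\<in>{w..}. gc u \<partial>lborel)"
  unfolding hfun_def
  by (intro nn_integral_cong) (auto simp: gc_def Fc_def indicator_def max_def)

lemma hfun_split:
  assumes "0 \<le> w" "w \<le> v"
  shows "hfun F w = (\<integral>\<^sup>+u\<in>{w..<v}. gc u \<partial>lborel) + hfun F v"
proof -
  have "hfun F w = (\<integral>\<^sup>+u. gc u * indicator {w..<v} u + gc u * indicator {v..} u \<partial>lborel)"
    unfolding hfun_alt[OF assms(1)]
    by (intro nn_integral_cong) (use assms in \<open>auto simp: indicator_def\<close>)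
  also have "... = (\<integral>\<^sup>+u\<in>{w..<v}. gc u \<partial>lborel) + (\<integral>\<^sup>+u\<in>{v..}. gc u \<partial>lborel)"
    by (rule nn_integral_add) auto
  finally show ?thesis using hfun_alt[of v] assms by simp
qed

lemma gc_int_pos:
  assumes "w < v"
  shows "(\<integral>\<^sup>+u\<in>{w..<v}. gc u \<partial>lborel) > 0"
proof (rule ccontr)
  assume "\<not> ?thesis"
  then have "(\<integral>\<^sup>+u. gc u * indicator {w..<v} u \<partial>lborel) = 0" by simp
  then have "AE u in lborel. gc u * indicator {w..<v} u = 0"
    by (subst (asm) nn_integral_0_iff_AE) auto
  then have "AE u in lborel. u \<notin> {w..<v}"
    by eventually_elim (auto simp: indicator_def gc_ne0 split: if_splits)
  then have "emeasure lborel {w..<v} = 0"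
    by (subst AE_iff_measurable[symmetric, where P="\<lambda>u. u \<notin> {w..<v}"]) auto
  then show False using assms by simp
qed

lemma F_zero_below:
  assumes "0 \<le> x" "x \<le> v" "F v = 0"
  shows "F x = 0"
proof (cases "v = 0")
  case True then show ?thesis using assms F_zero by simp
next
  case False
  then have v: "v > 0" using assms by simp
  have "F ((1 - x / v) *\<^sub>R 0 + (x / v) *\<^sub>R v) \<le> (1 - x / v) * F 0 + (x / v) * F v"
    by (rule convex_onD[OF F_convex]) (use assms v in auto)
  then have "F x \<le> 0" using v assms F_zero by simp
  then show ?thesis using F_nonneg[of x] assms by simp
qed

lemma F_pos_beyond:
  assumes "0 \<le> w" "hfun F w < \<infinity>" "w < v"
  shows "F v > 0"
proof (rule ccontr)
  assume "\<not> F v > 0"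
  then have Fv: "F v = 0" using F_nonneg[of v] assms by simp
  have "(\<integral>\<^sup>+u\<in>{w..<v}. gc u \<partial>lborel) = (\<integral>\<^sup>+u\<in>{w..<v}. \<infinity> \<partial>lborel)"
  proof (intro nn_integral_cong)
    fix u
    show "gc u * indicator {w..<v} u = \<infinity> * indicator {w..<v} u"
    proof (cases "u \<in> {w..<v}")
      case True
      then have "F u = 0" using F_zero_below[of u v] Fv assms by auto
      then show ?thesis using True assms by (simp add: gc_def Fc_def max_def)
    qed simp
  qed
  also have "... = \<infinity>" using assms by (simp add: nn_integral_cmult_indicator ennreal_mult_top)
  finally have "hfun F w = \<infinity>" using hfun_split[of w v] assms by simp
  then show False using assms by simp
qed

lemma gc_interval:
  assumes "0 \<le> w" "w \<le> v" and pos: "\<And>u. w \<le> u \<Longrightarrow> u \<le> v \<Longrightarrow> F u > 0"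
  shows "(\<lambda>u. 1 / F u) integrable_on {w..v}"
    and "(\<integral>\<^sup>+u\<in>{w..<v}. gc u \<partial>lborel) = ennreal (integral {w..v} (\<lambda>u. 1 / F u))"
proof -
  have c: "continuous_on {w..v} (\<lambda>u. 1 / F u)"
    by (intro continuous_on_divide continuous_on_const continuous_on_subset[OF F_cont])
      (use pos assms in force)+
  show int: "(\<lambda>u. 1 / F u) integrable_on {w..v}" by (rule integrable_continuous_interval[OF c])
  have hi: "((\<lambda>u. 1 / F u) has_integral integral {w..v} (\<lambda>u. 1 / F u)) {w..v}"
    using int by (simp add: has_integral_integrable_integral)
  have "(\<integral>\<^sup>+u\<in>{w..v}. ennreal (1 / F u) \<partial>lborel) = ennreal (integral {w..v} (\<lambda>u. 1 / F u))"
    by (rule nn_integral_has_integral_lebesgue'[OF _ hi]) (use pos in \<open>auto simp: less_imp_le\<close>)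
  moreover have "(\<integral>\<^sup>+u\<in>{w..<v}. gc u \<partial>lborel) = (\<integral>\<^sup>+u\<in>{w..v}. ennreal (1 / F u) \<partial>lborel)"
  proof (rule nn_integral_cong_AE)
    show "AE x in lborel. gc x * indicator {w..<v} x = ennreal (1 / F x) * indicator {w..v} x"
      using AE_lborel_singleton[of v]
    proof eventually_elim
      case (elim x)
      show ?case
      proof (cases "x \<in> {w..<v}")
        case True
        then have "Fc x = F x" "F x > 0" using assms pos[of x] by (auto simp: Fc_def max_def)
        then show ?thesis using True by (simp add: gc_def)
      next
        case False
        then have "x \<notin> {w..v}" using elim by auto
        then show ?thesis using False by simp
      qed
    qed
  qed
  ultimately show "(\<integral>\<^sup>+u\<in>{w..<v}. gc u \<partial>lborel) = ennreal (integral {w..v} (\<lambda>u. 1 / F u))"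
    by simp
qed

lemma F_tangent: "c \<ge> 0 \<Longrightarrow> \<exists>D. \<forall>y\<ge>0. F y \<ge> F c + D * (y - c)"
proof (cases "c = 0")
  case True
  then show ?thesis using F_zero F_nonneg by (intro exI[of _ 0]) auto
next
  case False
  assume "c \<ge> 0"
  with False have c: "c > 0" by simp
  show ?thesis
  proof (intro exI[of _ "F' c"] allI impI)
    fix y :: real assume y: "y \<ge> 0"
    have "F y - F c \<ge> F' c * (y - c)"
      by (rule convex_on_imp_above_tangent[OF F_convex])
        (use c y F_der[of c] in \<open>auto simp: convex_connected\<close>)
    then show "F y \<ge> F c + F' c * (y - c)" by simp
  qed
qed

lemma F_upper:
  assumes "a \<ge> 0" "F a = 0" "u > a"
  shows "F u \<le> F' u * (u - a)"
proof -
  have "F a - F u \<ge> F' u * (a - u)"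
    by (rule convex_on_imp_above_tangent[OF F_convex])
      (use assms F_der[of u] in \<open>auto simp: convex_connected\<close>)
  then show ?thesis using assms by (simp add: algebra_simps)
qed

lemma hfun_antimono:
  assumes "0 \<le> w" "w \<le> v" shows "hfun F v \<le> hfun F w"
  using hfun_split[OF assms] by simp

lemma hfun_tail_small:
  assumes "0 \<le> a0" "hfun F a0 < \<infinity>" "T > 0"
  shows "\<exists>n::nat. hfun F (a0 + real n) < ennreal T"
proof (rule ccontr)
  assume "\<not> ?thesis"
  then have ge: "\<And>n. ennreal T \<le> hfun F (a0 + real n)" by (auto simp: not_less)
  define I where "I n = (\<integral>\<^sup>+u\<in>{a0..<a0 + real n}. gc u \<partial>lborel)" for n :: nat
  have le: "I n + ennreal T \<le> hfun F a0" for n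
  proof -
    have "hfun F a0 = I n + hfun F (a0 + real n)" unfolding I_def
      by (rule hfun_split) (use assms in auto)
    then show ?thesis using ge[of n] by (simp add: add_left_mono)
  qed
  have "(SUP n. I n) = (\<integral>\<^sup>+u. (SUP n. gc u * indicator {a0..<a0 + real n} u) \<partial>lborel)"
    unfolding I_def
  proof (rule nn_integral_monotone_convergence_SUP[symmetric])
    show "incseq (\<lambda>n u. gc u * indicator {a0..<a0 + real n} u)"
      by (auto simp: incseq_def le_fun_def indicator_def)
  qed measurable
  also have "... = hfun F a0"
    unfolding hfun_alt[OF assms(1)]
  proof (intro nn_integral_cong)
    fix u
    show "(SUP n. gc u * indicator {a0..<a0 + real n} u) = gc u * indicator {a0..} u"
    proof (cases "u \<ge> a0")
      case True
      obtain n :: nat where "u - a0 < real n" using reals_Archimedean2 by blast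
      then have "gc u * indicator {a0..<a0 + real n} u = gc u" using True by simp
      then have "gc u \<le> (SUP n. gc u * indicator {a0..<a0 + real n} u)"
        using SUP_upper[of n UNIV "\<lambda>n. gc u * indicator {a0..<a0 + real n} u"] by simp
      moreover have "(SUP n. gc u * indicator {a0..<a0 + real n} u) \<le> gc u"
        by (intro SUP_least) (auto simp: indicator_def)
      ultimately show ?thesis using True by simp
    qed simp
  qed
  finally have sup: "(SUP n. I n) = hfun F a0" .
  have "(SUP n. I n) + ennreal T = (SUP n. I n + ennreal T)"
    by (rule ennreal_SUP_add_left[symmetric]) simp
  also have "... \<le> hfun F a0" using le by (intro SUP_least) auto
  finally have "hfun F a0 + ennreal T \<le> hfun F a0 + 0" using sup by simp
  then have "ennreal T \<le> 0" using assms(2) by (subst (asm) ennreal_add_left_cancel_le) auto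
  then show False using assms(3) by simp
qed

end

context fct begin

lemma hfun_exists:
  assumes a0: "0 \<le> a0" "hfun F a0 < \<infinity>" and T: "T > 0"
  shows "\<exists>w>0. hfun F w = ennreal T"
proof -
  define Z where "Z = {v \<in> {0..}. F v = 0}"
  have Zc: "closed Z" unfolding Z_def
    by (rule continuous_closed_preimage_constant[OF F_cont]) auto
  have Zne: "0 \<in> Z" using F_zero by (simp add: Z_def)
  have Zb: "\<forall>v\<in>Z. v \<le> a0"
  proof
    fix v assume "v \<in> Z"
    then show "v \<le> a0" using F_pos_beyond[OF a0, of v] by (force simp: Z_def not_le)
  qed
  then have bdd: "bdd_above Z" by (auto simp: bdd_above_def)
  define a where "a = Sup Z"
  have aZ: "a \<in> Z" unfolding a_def by (rule closed_contains_Sup) (use Zne bdd Zc in auto)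
  then have a_nn: "0 \<le> a" and Fa: "F a = 0" by (auto simp: Z_def)
  have aa0: "a \<le> a0" using Zb aZ by auto
  have Fpos: "F v > 0" if "v > a" for v
  proof (rule ccontr)
    assume "\<not> F v > 0"
    then have "v \<in> Z" using F_nonneg[of v] that a_nn by (auto simp: Z_def)
    then have "v \<le> a" unfolding a_def using bdd by (rule cSup_upper)
    then show False using that by simp
  qed
  have hfin: "hfun F w < \<infinity>" if "w > a" for w
  proof (cases "w \<ge> a0")
    case True
    then show ?thesis using hfun_antimono[of a0 w] a0 by (simp add: le_less_trans)
  next
    case False
    have "hfun F w = (\<integral>\<^sup>+u\<in>{w..<a0}. gc u \<partial>lborel) + hfun F a0"
      by (rule hfun_split) (use False that a_nn in auto)
    also have "(\<integral>\<^sup>+u\<in>{w..<a0}. gc u \<partial>lborel) = ennreal (integral {w..a0} (\<lambda>u. 1 / F u))"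
      by (rule gc_interval(2)) (use False that a_nn Fpos in auto)
    finally have eq: "hfun F w = ennreal (integral {w..a0} (\<lambda>u. 1 / F u)) + hfun F a0" .
    show ?thesis using a0(2) by (simp add: eq less_top[symmetric])
  qed
  obtain B where B: "\<forall>x\<in>F' ` {a..a+1}. \<bar>x\<bar> \<le> B"
  proof -
    have "compact (F' ` {a..a+1})"
      by (rule compact_continuous_image[OF continuous_on_subset[OF F'_cont]]) (use a_nn in auto)
    then have "bounded (F' ` {a..a+1})" by (rule compact_imp_bounded)
    then show ?thesis using that by (auto simp: bounded_real)
  qed
  define C where "C = \<bar>B\<bar> + 1"
  have C: "C > 0" by (simp add: C_def add_nonneg_pos)
  have Fle: "F u \<le> C * (u - a)" if "a < u" "u \<le> a + 1" for u
  proof -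
    have "\<bar>F' u\<bar> \<le> B" using B that by auto
    then have "\<bar>F' u\<bar> \<le> C" using abs_ge_self[of B] unfolding C_def by linarith
    then have "F' u * (u - a) \<le> C * (u - a)" using that by (intro mult_right_mono) auto
    then show ?thesis using F_upper[OF a_nn Fa that(1)] by linarith
  qed
  define w1 where "w1 = a + exp (- (C * T))"
  have e: "exp (- (C * T)) < 1"
    by (subst exp_zero[symmetric], subst exp_less_cancel_iff) (use C T in simp)
  have w1: "a < w1" "w1 < a + 1" using e by (auto simp: w1_def)
  have FTC: "((\<lambda>u. 1 / (C * (u - a))) has_integral T) {w1..a+1}"
  proof -
    have "((\<lambda>u. 1 / (C * (u - a))) has_integral (ln ((a+1) - a) / C - ln (w1 - a) / C)) {w1..a+1}"
    proof (rule fundamental_theorem_of_calculus)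
      show "w1 \<le> a + 1" using w1 by simp
      fix x assume x: "x \<in> {w1..a+1}"
      then have xa: "x - a > 0" using w1 by auto
      have "((\<lambda>u. ln (u - a) / C) has_real_derivative (1 / (x - a)) / C) (at x within {w1..a+1})"
      proof -
        have d1: "((\<lambda>u. u - a) has_real_derivative 1) (at x within {w1..a+1})"
          by (intro derivative_eq_intros) auto
        have "((\<lambda>u. ln (u - a)) has_real_derivative (1 / (x - a)) * 1) (at x within {w1..a+1})"
          by (rule DERIV_chain2[OF DERIV_ln_divide d1]) (use xa in simp)
        then show ?thesis by (intro DERIV_cdivide) simp
      qed
      then show "((\<lambda>u. ln (u - a) / C) has_vector_derivative 1 / (C * (x - a))) (at x within {w1..a+1})"
        by (simp add: has_real_derivative_iff_has_vector_derivative[symmetric] field_simps)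
    qed
    also have "ln ((a+1) - a) / C - ln (w1 - a) / C = T" using C by (simp add: w1_def)
    finally show ?thesis .
  qed
  have posw1: "F u > 0" if "w1 \<le> u" for u using Fpos[of u] w1 that by simp
  have "integral {w1..a+1} (\<lambda>u. 1 / (C * (u - a))) \<le> integral {w1..a+1} (\<lambda>u. 1 / F u)"
  proof (rule integral_le)
    show "(\<lambda>u. 1 / (C * (u - a))) integrable_on {w1..a+1}" using FTC by blast
    show "(\<lambda>u. 1 / F u) integrable_on {w1..a+1}"
      by (rule gc_interval(1)) (use w1 a_nn posw1 in auto)
    fix u assume u: "u \<in> {w1..a+1}"
    then have "0 < F u" "F u \<le> C * (u - a)" using posw1 Fle[of u] w1 by auto
    then show "1 / (C * (u - a)) \<le> 1 / F u"
      by (intro divide_left_mono) auto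
  qed
  then have TI: "T \<le> integral {w1..a+1} (\<lambda>u. 1 / F u)" using FTC by (simp add: integral_unique)
  have hw1: "ennreal T \<le> hfun F w1"
  proof -
    have "hfun F w1 = (\<integral>\<^sup>+u\<in>{w1..<a+1}. gc u \<partial>lborel) + hfun F (a+1)"
      by (rule hfun_split) (use w1 a_nn in auto)
    also have "(\<integral>\<^sup>+u\<in>{w1..<a+1}. gc u \<partial>lborel) = ennreal (integral {w1..a+1} (\<lambda>u. 1 / F u))"
      by (rule gc_interval(2)) (use w1 a_nn posw1 in auto)
    finally have "ennreal (integral {w1..a+1} (\<lambda>u. 1 / F u)) \<le> hfun F w1" by simp
    moreover have "ennreal T \<le> ennreal (integral {w1..a+1} (\<lambda>u. 1 / F u))"
      using TI by (rule ennreal_leI)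
    ultimately show ?thesis by simp
  qed
  obtain n :: nat where n: "hfun F (a0 + real n) < ennreal T"
    using hfun_tail_small[OF a0 T] by blast
  define w2 where "w2 = max (a0 + real n) w1"
  have w12: "w1 \<le> w2" by (simp add: w2_def)
  have hw2: "hfun F w2 \<le> ennreal T"
    using hfun_antimono[of "a0 + real n" w2] a0 n by (simp add: w2_def)
  have posI: "F u > 0" if "w1 \<le> u" for u using posw1 that by simp
  have int: "(\<lambda>u. 1 / F u) integrable_on {w1..w2}"
    by (rule gc_interval(1)) (use w1 a_nn posw1 w12 in auto)
  define H2 where "H2 = enn2real (hfun F w2)"
  have H2: "hfun F w2 = ennreal H2" "H2 \<ge> 0"
    using hfin[of w2] w1 w12 by (auto simp: H2_def less_top)
  define q where "q w = integral {w..w2} (\<lambda>u. 1 / F u) + H2" for w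
  have hq: "hfun F w = ennreal (q w)" and q0: "q w \<ge> 0" if "w1 \<le> w" "w \<le> w2" for w
  proof -
    have i0: "integral {w..w2} (\<lambda>u. 1 / F u) \<ge> 0"
      by (rule integral_nonneg) (use gc_interval(1)[of w w2] that w1 a_nn posw1 in \<open>auto simp: less_imp_le\<close>)
    have "hfun F w = (\<integral>\<^sup>+u\<in>{w..<w2}. gc u \<partial>lborel) + hfun F w2"
      by (rule hfun_split) (use that w1 a_nn in auto)
    also have "(\<integral>\<^sup>+u\<in>{w..<w2}. gc u \<partial>lborel) = ennreal (integral {w..w2} (\<lambda>u. 1 / F u))"
      by (rule gc_interval(2)) (use that w1 a_nn posw1 in auto)
    finally show "hfun F w = ennreal (q w)" using i0 H2 by (simp add: q_def ennreal_plus)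
    show "q w \<ge> 0" using i0 H2 by (simp add: q_def)
  qed
  have cont: "continuous_on {w1..w2} q"
    unfolding q_def by (intro continuous_intros indefinite_integral_continuous_1'[OF int])
  have "q w2 \<le> T" using hq[of w2] hw2 w12 H2 T by (simp add: q_def ennreal_le_iff)
  moreover have "T \<le> q w1" using hq[of w1] q0[of w1] hw1 w12 by (simp add: ennreal_le_iff)
  ultimately obtain w where w: "w1 \<le> w" "w \<le> w2" "q w = T"
    using IVT2'[of q w2 T w1, OF _ _ w12 cont] by auto
  then show ?thesis using hq[of w] w1 a_nn by (intro exI[of _ w]) auto
qed

lemma hfun_unique_aux:
  assumes "0 < w" "w < v" "hfun F w = ennreal T" "hfun F v = ennreal T"
  shows False
proof -
  have "hfun F w = (\<integral>\<^sup>+u\<in>{w..<v}. gc u \<partial>lborel) + hfun F v"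
    by (rule hfun_split) (use assms in auto)
  then have "ennreal T + (\<integral>\<^sup>+u\<in>{w..<v}. gc u \<partial>lborel) = ennreal T + 0"
    using assms by (simp add: add.commute)
  then have "(\<integral>\<^sup>+u\<in>{w..<v}. gc u \<partial>lborel) = 0"
    by (subst (asm) ennreal_add_left_cancel) auto
  then show False using gc_int_pos[OF assms(2)] by simp
qed

lemma hinv_props:
  assumes a0: "0 \<le> a0" "hfun F a0 < \<infinity>" and T: "T > 0"
  shows "hinv F T > 0" "hfun F (hinv F T) = ennreal T"
proof -
  have ex1: "\<exists>!w. w > 0 \<and> hfun F w = ennreal T"
  proof (rule ex_ex1I)
    show "\<exists>w. w > 0 \<and> hfun F w = ennreal T" using hfun_exists[OF a0 T] by blast
    fix w v assume "w > 0 \<and> hfun F w = ennreal T" "v > 0 \<and> hfun F v = ennreal T"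
    then show "w = v" using hfun_unique_aux[of w v T] hfun_unique_aux[of v w T]
      by (metis linorder_neqE_linordered_idom)
  qed
  from theI'[OF ex1] show "hinv F T > 0" "hfun F (hinv F T) = ennreal T"
    by (simp_all add: hinv_def)
qed

lemma final_H:
  assumes w: "w > 0" "hfun F w = ennreal T" and W0: "W0 > w" and T: "T > 0"
  shows "\<And>v. v \<ge> W0 \<Longrightarrow> F v > 0"
    and "\<exists>K<T. \<forall>b\<ge>W0. integral {W0..b} (\<lambda>u. 1 / F u) \<le> K"
proof -
  show pos: "F v > 0" if "v \<ge> W0" for v
    using F_pos_beyond[of w v] w W0 that by simp
  define X where "X = (\<integral>\<^sup>+u\<in>{w..<W0}. gc u \<partial>lborel)"
  have X: "X > 0" unfolding X_def using gc_int_pos W0 by simp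
  have eq: "ennreal T = X + hfun F W0" unfolding X_def w(2)[symmetric]
    by (rule hfun_split) (use w W0 in auto)
  have lt: "hfun F W0 < ennreal T"
  proof (rule ccontr)
    assume "\<not> ?thesis"
    then have "ennreal T + X \<le> ennreal T + 0" using eq
      by (metis add.commute add_left_mono not_le add.right_neutral)
    then have "X \<le> 0" by (subst (asm) ennreal_add_left_cancel_le) auto
    then show False using X by simp
  qed
  define K where "K = enn2real (hfun F W0)"
  have fin: "hfun F W0 \<noteq> \<infinity>" using order.strict_trans[OF lt ennreal_less_top] by (simp add: less_top)
  have K: "hfun F W0 = ennreal K" "K \<ge> 0" using fin by (auto simp: K_def less_top[symmetric])
  have "K < T" using lt K by (simp add: ennreal_less_iff)
  moreover have "integral {W0..b} (\<lambda>u. 1 / F u) \<le> K" if b: "b \<ge> W0" for b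
  proof -
    have "hfun F W0 = (\<integral>\<^sup>+u\<in>{W0..<b}. gc u \<partial>lborel) + hfun F b"
      by (rule hfun_split) (use w W0 b in auto)
    also have "(\<integral>\<^sup>+u\<in>{W0..<b}. gc u \<partial>lborel) = ennreal (integral {W0..b} (\<lambda>u. 1 / F u))"
      by (rule gc_interval(2)) (use w W0 b pos in auto)
    finally have "ennreal (integral {W0..b} (\<lambda>u. 1 / F u)) \<le> ennreal K" using K by simp
    then show ?thesis using K by (simp add: ennreal_le_iff)
  qed
  ultimately show "\<exists>K<T. \<forall>b\<ge>W0. integral {W0..b} (\<lambda>u. 1 / F u) \<le> K" by blast
qed

end

context kern begin

lemma Pk_tendsto:
  fixes g :: "real \<Rightarrow> 'a \<Rightarrow> real"
  assumes meas: "\<And>s. s \<in> X \<Longrightarrow> g s \<in> borel_measurable borel"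
    and bound: "\<And>s x. s \<in> X \<Longrightarrow> \<bar>g s x\<bar> \<le> Bd"
    and lim: "\<And>x. ((\<lambda>s. g s x) \<longlongrightarrow> l x) (at t within X)"
    and lm: "l \<in> borel_measurable borel"
  shows "((\<lambda>s. Pk J m (g s)) \<longlongrightarrow> Pk J m l) (at t within X)"
proof (cases m)
  case 0
  then show ?thesis using lim[of 0] by (simp add: Pk_def)
next
  case (Suc n)
  show ?thesis
    unfolding Suc Pk_def nat.case tendsto_at_iff_sequentially
  proof (intro allI impI)
    fix Xs :: "nat \<Rightarrow> real" assume Xs: "\<forall>i. Xs i \<in> X - {t}" "Xs \<longlonglongrightarrow> t"
    have "(\<lambda>i. \<integral>x. Jconv J n x * g (Xs i) x \<partial>lborel) \<longlonglongrightarrow> (\<integral>x. Jconv J n x * l x \<partial>lborel)"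
    proof (rule integral_dominated_convergence[where w="\<lambda>x. Bd * Jconv J n x"])
      show "(\<lambda>x. Jconv J n x * l x) \<in> borel_measurable lborel" using lm by measurable
      show "(\<lambda>x. Jconv J n x * g (Xs i) x) \<in> borel_measurable lborel" for i
      proof -
        have [measurable]: "g (Xs i) \<in> borel_measurable borel" using meas[of "Xs i"] Xs by auto
        show ?thesis by measurable
      qed
      show "integrable lborel (\<lambda>x. Bd * Jconv J n x)" using Jconv_int by simp
      show "AE x in lborel. (\<lambda>i. Jconv J n x * g (Xs i) x) \<longlonglongrightarrow> Jconv J n x * l x"
      proof (intro AE_I2 tendsto_mult_left)
        fix x
        from lim[of x] Xs show "(\<lambda>i. g (Xs i) x) \<longlonglongrightarrow> l x"
          unfolding tendsto_at_iff_sequentially by (auto simp: o_def)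
      qed
      show "AE x in lborel. norm (Jconv J n x * g (Xs i) x) \<le> Bd * Jconv J n x" for i
      proof (intro AE_I2)
        fix x
        have "\<bar>Jconv J n x * g (Xs i) x\<bar> = Jconv J n x * \<bar>g (Xs i) x\<bar>"
          using Jconv_nonneg by (simp add: abs_mult)
        also have "... \<le> Jconv J n x * Bd" using bound[of "Xs i" x] Xs Jconv_nonneg
          by (intro mult_left_mono) auto
        finally show "norm (Jconv J n x * g (Xs i) x) \<le> Bd * Jconv J n x" by (simp add: mult.commute)
      qed
    qed
    then show "((\<lambda>s. \<integral>x. Jconv J n x * g s x \<partial>lborel) \<circ> Xs) \<longlonglongrightarrow> (\<integral>x. Jconv J n x * l x \<partial>lborel)"
      by (simp add: o_def)
  qed
qed

end

locale sol = kern J + fct F F' for J :: "'a::euclidean_space \<Rightarrow> real" and F F' +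
  fixes u :: "'a \<Rightarrow> real \<Rightarrow> real" and S T M FM :: real
  assumes T_pos: "0 < T" and TS: "T < S"
  and u_cont: "continuous_on (UNIV \<times> {0..<S}) (\<lambda>(x, t). u x t)"
  and u_nonneg: "\<And>x t. t \<in> {0..<S} \<Longrightarrow> 0 \<le> u x t"
  and u_bound: "\<And>x t. t \<in> {0..T} \<Longrightarrow> u x t \<le> M"
  and FM: "\<And>v. v \<in> {0..M} \<Longrightarrow> F v \<le> FM"
  and u_der: "\<And>x t. t \<in> {0<..<S} \<Longrightarrow> ((\<lambda>s. u x s) has_real_derivative
       ((\<integral>y. J (x - y) * u y t \<partial>lborel) - u x t + F (u x t))) (at t)"
begin

lemma u_cont_x: "t \<in> {0..<S} \<Longrightarrow> continuous_on UNIV (\<lambda>x. u x t)"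
proof -
  assume t: "t \<in> {0..<S}"
  have c: "continuous_on UNIV (\<lambda>x. (x, t))" by (intro continuous_intros)
  have r: "(\<lambda>x. (x, t)) ` UNIV \<subseteq> UNIV \<times> {0..<S}" using t by auto
  show ?thesis using continuous_on_compose2[OF u_cont c r] by simp
qed

lemma u_cont_t: "continuous_on {0..<S} (\<lambda>t. u x t)"
proof -
  have c: "continuous_on {0..<S} (\<lambda>t. (x, t))" by (intro continuous_intros)
  have r: "(\<lambda>t. (x, t)) ` {0..<S} \<subseteq> UNIV \<times> {0..<S}" by auto
  show ?thesis using continuous_on_compose2[OF u_cont c r] by simp
qed

lemma u_meas: "t \<in> {0..<S} \<Longrightarrow> (\<lambda>x. u x t) \<in> borel_measurable borel"
  using u_cont_x by (simp add: borel_measurable_continuous_onI)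

lemma M_nonneg: "0 \<le> M"
  using u_nonneg[of 0 undefined] u_bound[of 0 undefined] T_pos TS by auto

lemma FM_nonneg: "0 \<le> FM"
  using FM[of 0] F_zero M_nonneg by auto

lemma TinS: "t \<in> {0..T} \<Longrightarrow> t \<in> {0..<S}"
  using TS by auto

lemma Fu_meas: "t \<in> {0..<S} \<Longrightarrow> (\<lambda>x. F (u x t)) \<in> borel_measurable borel"
proof -
  assume t: "t \<in> {0..<S}"
  have "(\<lambda>x. Fc (u x t)) \<in> borel_measurable borel"
    using u_meas[OF t] by measurable
  moreover have "(\<lambda>x. Fc (u x t)) = (\<lambda>x. F (u x t))"
    using u_nonneg[OF t] by (auto simp: Fc_def max_def)
  ultimately show ?thesis by simp
qed

lemma Fu_bounds: "t \<in> {0..T} \<Longrightarrow> 0 \<le> F (u x t) \<and> F (u x t) \<le> FM"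
  using F_nonneg FM u_nonneg[OF TinS] u_bound by auto

definition Ju :: "real \<Rightarrow> 'a \<Rightarrow> real" where
  "Ju t x = (\<integral>y. J (x - y) * u y t \<partial>lborel)"

lemma Ju_props:
  assumes t: "t \<in> {0..T}"
  shows "Ju t \<in> borel_measurable borel" "0 \<le> Ju t x" "Ju t x \<le> M"
proof -
  note JP = Jf_props[of "\<lambda>y. u y t" M, OF u_meas[OF TinS[OF t]] u_nonneg[OF TinS[OF t]] u_bound[OF t]]
  show "Ju t \<in> borel_measurable borel" using JP(1) by (simp add: Ju_def[abs_def])
  show "0 \<le> Ju t x" "Ju t x \<le> M" using JP(3,4) by (simp_all add: Ju_def)
qed

definition ud :: "real \<Rightarrow> 'a \<Rightarrow> real" where
  "ud t x = Ju t x - u x t + F (u x t)"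

lemma ud_props:
  assumes t: "t \<in> {0..T}"
  shows "ud t \<in> borel_measurable borel" "\<bar>ud t x\<bar> \<le> 2 * M + FM"
proof -
  have [measurable]: "Ju t \<in> borel_measurable borel" "(\<lambda>x. u x t) \<in> borel_measurable borel"
      "(\<lambda>x. F (u x t)) \<in> borel_measurable borel"
    using Ju_props(1)[OF t] u_meas[OF TinS[OF t]] Fu_meas[OF TinS[OF t]] by auto
  show "ud t \<in> borel_measurable borel" unfolding ud_def[abs_def] by measurable
  show "\<bar>ud t x\<bar> \<le> 2 * M + FM"
    using Ju_props(2,3)[OF t, of x] u_nonneg[OF TinS[OF t], of x] u_bound[OF t, of x] Fu_bounds[OF t, of x]
    unfolding ud_def by linarith
qed

lemma u_der': "t \<in> {0<..<S} \<Longrightarrow> ((\<lambda>s. u x s) has_real_derivative ud t x) (at t)"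
  using u_der by (simp add: ud_def Ju_def)

definition A :: "nat \<Rightarrow> real \<Rightarrow> real" where "A m t = Pk J m (\<lambda>x. u x t)"
definition B :: "nat \<Rightarrow> real \<Rightarrow> real" where "B m t = Pk J m (\<lambda>x. F (u x t))"

lemma A_bounds: "t \<in> {0..T} \<Longrightarrow> 0 \<le> A m t \<and> A m t \<le> M"
proof -
  assume t: "t \<in> {0..T}"
  have um: "(\<lambda>x. u x t) \<in> borel_measurable borel" using u_meas[OF TinS[OF t]] .
  have ub: "\<bar>u x t\<bar> \<le> M" for x using u_nonneg[OF TinS[OF t], of x] u_bound[OF t, of x] by simp
  have "Pk J m (\<lambda>x. 0) \<le> A m t" unfolding A_def
    by (rule Pk_mono[where B=M]) (use um ub M_nonneg u_nonneg[OF TinS[OF t]] in auto)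
  moreover have "A m t \<le> Pk J m (\<lambda>x. M)" unfolding A_def
    by (rule Pk_mono[where B=M]) (use um ub M_nonneg u_bound[OF t] in auto)
  ultimately show ?thesis by (simp add: Pk_const)
qed

lemma B_bounds: "t \<in> {0..T} \<Longrightarrow> 0 \<le> B m t \<and> B m t \<le> FM"
proof -
  assume t: "t \<in> {0..T}"
  have um: "(\<lambda>x. F (u x t)) \<in> borel_measurable borel" using Fu_meas[OF TinS[OF t]] .
  have ub: "\<bar>F (u x t)\<bar> \<le> FM" for x using Fu_bounds[OF t, of x] by simp
  have "Pk J m (\<lambda>x. 0) \<le> B m t" unfolding B_def
    by (rule Pk_mono[where B=FM]) (use um ub FM_nonneg Fu_bounds[OF t] in auto)
  moreover have "B m t \<le> Pk J m (\<lambda>x. FM)" unfolding B_def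
    by (rule Pk_mono[where B=FM]) (use um ub FM_nonneg Fu_bounds[OF t] in auto)
  ultimately show ?thesis by (simp add: Pk_const)
qed

lemma Pk_ud: "t \<in> {0..T} \<Longrightarrow> Pk J m (ud t) = A (Suc m) t - A m t + B m t"
proof -
  assume t: "t \<in> {0..T}"
  have um: "(\<lambda>x. u x t) \<in> borel_measurable borel" using u_meas[OF TinS[OF t]] .
  have "Pk J m (ud t) = Pk J m (Ju t) - Pk J m (\<lambda>x. u x t) + Pk J m (\<lambda>x. F (u x t))"
  proof -
    have b1: "\<bar>Ju t x\<bar> \<le> M + FM" for x using Ju_props(2,3)[OF t, of x] FM_nonneg by linarith
    have b2: "\<bar>u x t\<bar> \<le> M + FM" for x using u_nonneg[OF TinS[OF t], of x] u_bound[OF t, of x] FM_nonneg by linarith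
    have b3: "\<bar>F (u x t)\<bar> \<le> M + FM" for x using Fu_bounds[OF t, of x] M_nonneg by linarith
    show ?thesis unfolding ud_def[abs_def]
      by (rule Pk_lin3[where B="M + FM"]) (use Ju_props(1)[OF t] um Fu_meas[OF TinS[OF t]] b1 b2 b3 in auto)
  qed
  also have "Pk J m (Ju t) = A (Suc m) t" unfolding A_def Ju_def[abs_def]
    by (rule Pk_conv[where B=M]) (use um u_nonneg[OF TinS[OF t]] u_bound[OF t] in auto)
  finally show ?thesis by (simp add: A_def B_def)
qed

lemma quot_bound:
  assumes s: "s \<in> {0<..<T}" and t: "t \<in> {0<..<T}"
  shows "\<bar>u x s - u x t\<bar> \<le> (2 * M + FM) * \<bar>s - t\<bar>"
proof -
  have main: "\<bar>u x b - u x a\<bar> \<le> (2 * M + FM) * (b - a)" if ab: "a < b" "a \<in> {0<..<T}" "b \<in> {0<..<T}" for a b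
  proof -
    obtain z where z: "a < z" "z < b" "u x b - u x a = (b - a) * ud z x"
      using MVT2[OF ab(1), of "\<lambda>s. u x s" "\<lambda>z. ud z x"] u_der' ab TS by force
    have "\<bar>ud z x\<bar> \<le> 2 * M + FM" using ud_props(2)[of z x] z ab by auto
    then show ?thesis using z ab by (simp add: abs_mult mult.commute mult_right_mono)
  qed
  show ?thesis
  proof (cases s t rule: linorder_cases)
    case less then show ?thesis using main[of s t] s t by (simp add: abs_minus_commute)
  next
    case equal then show ?thesis by simp
  next
    case greater then show ?thesis using main[of t s] s t by simp
  qed
qed

lemma A_deriv: "t \<in> {0<..<T} \<Longrightarrow> (A m has_real_derivative Pk J m (ud t)) (at t)"
proof -
  assume t: "t \<in> {0<..<T}"
  show ?thesis
  proof (cases m)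
    case 0
    then show ?thesis using u_der'[of t 0] t TS by (simp add: A_def[abs_def] Pk_def)
  next
    case (Suc n)
    define d where "d = min t (T - t)"
    have d: "d > 0" using t by (simp add: d_def)
    define X where "X = {t - d<..<t + d}"
    have X: "open X" "t \<in> X" "X \<subseteq> {0<..<T}" using d by (auto simp: X_def d_def)
    define L where "L = 2 * M + FM"
    define g where "g s x = (u x s - u x t) / (s - t)" for s x
    have gm: "g s \<in> borel_measurable borel" if "s \<in> X" for s
    proof -
      have [measurable]: "(\<lambda>x. u x s) \<in> borel_measurable borel" "(\<lambda>x. u x t) \<in> borel_measurable borel"
        using u_meas[of s] u_meas[of t] that X t TS by auto
      show ?thesis unfolding g_def by measurable
    qed
    have gb: "\<bar>g s x\<bar> \<le> L" if "s \<in> X" for s x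
    proof (cases "s = t")
      case True then show ?thesis using M_nonneg FM_nonneg by (simp add: g_def L_def)
    next
      case False
      have "\<bar>u x s - u x t\<bar> \<le> L * \<bar>s - t\<bar>" using quot_bound[of s t x] that X t by (auto simp: L_def)
      then show ?thesis using False by (simp add: g_def abs_divide divide_le_eq)
    qed
    have gl: "((\<lambda>s. g s x) \<longlongrightarrow> ud t x) (at t within X)" for x
    proof -
      have "((\<lambda>s. g s x) \<longlongrightarrow> ud t x) (at t)"
        using u_der'[of t x] t TS unfolding has_field_derivative_iff g_def by simp
      then show ?thesis by (rule tendsto_mono[OF at_le, rotated]) simp
    qed
    have "((\<lambda>s. Pk J m (g s)) \<longlongrightarrow> Pk J m (ud t)) (at t within X)"
      by (rule Pk_tendsto[OF gm gb gl]) (use ud_props(1)[of t] t in auto)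
    moreover have "\<forall>\<^sub>F s in at t within X. Pk J m (g s) = (A m s - A m t) / (s - t)"
      unfolding eventually_at_filter
    proof (intro always_eventually allI impI)
      fix s assume "s \<noteq> t" "s \<in> X"
      have um: "(\<lambda>x. u x s) \<in> borel_measurable borel" "(\<lambda>x. u x t) \<in> borel_measurable borel"
        using u_meas[of s] u_meas[of t] \<open>s \<in> X\<close> X t TS by auto
      have ub: "\<bar>u x s\<bar> \<le> M" "\<bar>u x t\<bar> \<le> M" for x
        using u_nonneg[of s x] u_bound[of s x] u_nonneg[of t x] u_bound[of t x] \<open>s \<in> X\<close> X t TS by auto
      have "Pk J m (g s) = Pk J m (\<lambda>x. 0 + (1 / (s - t)) * (u x s - u x t + 0))"
        unfolding g_def[abs_def] by simp
      also have "... = 0 + (1 / (s - t)) * Pk J m (\<lambda>x. u x s - u x t + 0)"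
      proof (rule Pk_affine[where B="2 * M"])
        show "(\<lambda>x. u x s - u x t + 0) \<in> borel_measurable borel" using um by measurable
        fix x show "\<bar>u x s - u x t + 0\<bar> \<le> 2 * M" using ub(1)[of x] ub(2)[of x] by (auto simp: abs_le_iff)
      qed
      also have "Pk J m (\<lambda>x. u x s - u x t + 0) = A m s - A m t + Pk J m (\<lambda>x. 0)"
        unfolding A_def by (rule Pk_lin3[where B=M]) (use um ub M_nonneg in auto)
      finally show "Pk J m (g s) = (A m s - A m t) / (s - t)" by (simp add: Pk_const)
    qed
    ultimately have "((\<lambda>s. (A m s - A m t) / (s - t)) \<longlongrightarrow> Pk J m (ud t)) (at t within X)"
      by (simp add: tendsto_cong)
    then show ?thesis unfolding has_field_derivative_iff using at_within_open[OF X(2,1)] by simp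
  qed
qed

lemma A_cont: "continuous_on {0..<T} (A m)"
  unfolding continuous_on_def
proof
  fix t assume t: "t \<in> {0..<T}"
  have "((\<lambda>s. Pk J m (\<lambda>x. u x s)) \<longlongrightarrow> Pk J m (\<lambda>x. u x t)) (at t within {0..<T})"
  proof (rule Pk_tendsto[where Bd=M])
    show "(\<lambda>x. u x s) \<in> borel_measurable borel" if "s \<in> {0..<T}" for s using u_meas[of s] that TS by auto
    show "\<bar>u x s\<bar> \<le> M" if "s \<in> {0..<T}" for s x using u_nonneg[of s x] u_bound[of s x] that TS by auto
    show "(\<lambda>x. u x t) \<in> borel_measurable borel" using u_meas[of t] t TS by auto
    fix x
    have "((\<lambda>s. u x s) \<longlongrightarrow> u x t) (at t within {0..<S})"
      using u_cont_t[of x] t TS unfolding continuous_on_def by auto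
    then show "((\<lambda>s. u x s) \<longlongrightarrow> u x t) (at t within {0..<T})"
      by (rule tendsto_mono[OF at_le, rotated]) (use TS in auto)
  qed
  then show "(A m \<longlongrightarrow> A m t) (at t within {0..<T})" by (simp add: A_def[abs_def])
qed

definition c :: "nat \<Rightarrow> real \<Rightarrow> real" where
  "c m t = exp (t - T) * (T - t) ^ m / fact m"
definition cp :: "nat \<Rightarrow> real \<Rightarrow> real" where
  "cp m t = (if m = 0 then 0 else c (m - 1) t)"

lemma c_alg: "n > 0 \<Longrightarrow> f > 0 \<Longrightarrow>
  (E * 1 * (x * P) + E * (n * P * (0 - 1))) / (n * f) = E * (x * P) / (n * f) - E * P / (f::real)"
  by (simp add: field_simps)

lemma c_deriv: "(c m has_real_derivative (c m t - cp m t)) (at t)"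
proof (cases m)
  case 0
  have "((\<lambda>s. exp (s - T)) has_real_derivative exp (t - T) * 1) (at t)"
    by (intro derivative_eq_intros) auto
  then show ?thesis using 0 by (simp add: c_def[abs_def] cp_def)
next
  case (Suc k)
  have "((\<lambda>s. exp (s - T) * (T - s) ^ Suc k / fact (Suc k)) has_real_derivative
      (exp (t - T) * 1 * (T - t) ^ Suc k + exp (t - T) * (real (Suc k) * (T - t) ^ k * (0 - 1))) / fact (Suc k)) (at t)"
    by (intro derivative_eq_intros DERIV_cdivide) auto
  also have "(exp (t - T) * 1 * (T - t) ^ Suc k + exp (t - T) * (real (Suc k) * (T - t) ^ k * (0 - 1))) / fact (Suc k)
      = c (Suc k) t - c k t"
    unfolding c_def power_Suc fact_Suc by (rule c_alg) auto
  finally show ?thesis using Suc by (simp add: c_def[abs_def] cp_def)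
qed

lemma c_cont: "continuous_on X (c m)"
  by (rule DERIV_continuous_on) (rule has_field_derivative_at_within[OF c_deriv])

lemma c_bounds: "t \<in> {0..T} \<Longrightarrow> 0 \<le> c m t \<and> c m t \<le> T ^ m / fact m"
proof -
  assume t: "t \<in> {0..T}"
  have e: "exp (t - T) \<le> 1" using t by simp
  have p: "(T - t) ^ m \<le> T ^ m" using t by (intro power_mono) auto
  have "exp (t - T) * (T - t) ^ m \<le> 1 * T ^ m"
    by (rule mult_mono[OF e p]) (use t in auto)
  then show ?thesis using t by (auto simp: c_def divide_right_mono)
qed

lemma exp_sums: "(\<lambda>m. (x::real) ^ m / fact m) sums exp x"
  using exp_converges[of x] by (simp add: divide_inverse mult.commute)

lemma c_sums: "(\<lambda>m. c m t) sums 1"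
proof -
  have "(\<lambda>m. exp (t - T) * ((T - t) ^ m / fact m)) sums (exp (t - T) * exp (T - t))"
    by (rule sums_mult[OF exp_sums])
  moreover have "exp (t - T) * exp (T - t) = 1" by (simp add: exp_add[symmetric])
  ultimately show ?thesis by (simp add: c_def[abs_def] mult.assoc)
qed

lemma summable_Tm: "summable (\<lambda>m. T ^ m / fact m)"
  using exp_sums by (rule sums_summable)

lemma summable_Tm': "summable (\<lambda>m. if m = 0 then 0 else T ^ (m - 1) / fact (m - 1))"
proof -
  have "summable (\<lambda>m. (\<lambda>m. if m = 0 then 0 else T ^ (m - 1) / fact (m - 1)) (Suc m))"
    using summable_Tm by simp
  then show ?thesis by (rule summable_Suc_iff[THEN iffD1])
qed

definition W :: "real \<Rightarrow> real" where "W t = (\<Sum>m. c m t * A m t)"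

lemma cA_bound: "t \<in> {0..T} \<Longrightarrow> \<bar>c m t * A k t\<bar> \<le> T ^ m / fact m * M"
proof -
  assume t: "t \<in> {0..T}"
  have "\<bar>c m t * A k t\<bar> = c m t * A k t" using c_bounds[OF t, of m] A_bounds[OF t, of k] by simp
  also have "... \<le> T ^ m / fact m * M"
    using c_bounds[OF t, of m] A_bounds[OF t, of k] by (intro mult_mono) auto
  finally show ?thesis .
qed

lemma cA_summable: "t \<in> {0..T} \<Longrightarrow> summable (\<lambda>m. c m t * A (f m) t)"
  by (rule summable_comparison_test[OF _ summable_mult2[OF summable_Tm, of M]])
    (use cA_bound in auto)

lemma cB_summable: "t \<in> {0..T} \<Longrightarrow> summable (\<lambda>m. c m t * B m t)"
proof (rule summable_comparison_test[OF _ summable_mult2[OF summable_Tm, of FM]])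
  assume t: "t \<in> {0..T}"
  show "\<exists>N. \<forall>n\<ge>N. norm (c n t * B n t) \<le> T ^ n / fact n * FM"
  proof (intro exI allI impI)
    fix n
    have "\<bar>c n t * B n t\<bar> = c n t * B n t" using c_bounds[OF t, of n] B_bounds[OF t, of n] by simp
    also have "... \<le> T ^ n / fact n * FM"
      using c_bounds[OF t, of n] B_bounds[OF t, of n] by (intro mult_mono) auto
    finally show "norm (c n t * B n t) \<le> T ^ n / fact n * FM" by simp
  qed
qed

lemma W_summable: "t \<in> {0..T} \<Longrightarrow> summable (\<lambda>m. c m t * A m t)"
  using cA_summable[of t "\<lambda>m. m"] by simp

lemma W_bounds: "t \<in> {0..T} \<Longrightarrow> 0 \<le> W t \<and> W t \<le> M"
proof -
  assume t: "t \<in> {0..T}"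
  have "0 \<le> W t" unfolding W_def
    by (rule suminf_nonneg[OF W_summable[OF t]]) (use c_bounds[OF t] A_bounds[OF t] in auto)
  moreover have "W t \<le> (\<Sum>m. c m t * M)" unfolding W_def
    by (rule suminf_le[OF _ W_summable[OF t]]) (use c_bounds[OF t] A_bounds[OF t] sums_summable[OF sums_mult2[OF c_sums]] in \<open>auto intro: mult_left_mono\<close>)
  moreover have "(\<Sum>m. c m t * M) = M" using sums_mult2[OF c_sums[of t], of M] by (simp add: sums_iff)
  ultimately show ?thesis by simp
qed

lemma W_cont: "continuous_on {0..<T} W"
proof (rule uniform_limit_theorem[where F=sequentially])
  show "\<forall>\<^sub>F n in sequentially. continuous_on {0..<T} (\<lambda>t. \<Sum>i<n. c i t * A i t)"
    by (intro always_eventually allI continuous_on_sum continuous_on_mult c_cont A_cont)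
  show "uniform_limit {0..<T} (\<lambda>n t. \<Sum>i<n. c i t * A i t) W sequentially"
    unfolding W_def[abs_def]
    by (rule Weierstrass_m_test[OF _ summable_mult2[OF summable_Tm, of M]]) (use cA_bound in auto)
qed simp

lemma cB_ge: "t \<in> {0<..<T} \<Longrightarrow> F (W t) \<le> (\<Sum>m. c m t * B m t)"
proof -
  assume t0: "t \<in> {0<..<T}"
  then have t: "t \<in> {0..T}" by auto
  define w where "w = W t"
  have w: "0 \<le> w" "w \<le> M" using W_bounds[OF t] by (auto simp: w_def)
  obtain D where D: "\<And>y. y \<ge> 0 \<Longrightarrow> F y \<ge> F w + D * (y - w)" using F_tangent[OF w(1)] by blast
  have um: "(\<lambda>x. u x t) \<in> borel_measurable borel" using u_meas[OF TinS[OF t]] .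
  have ub: "\<bar>u x t\<bar> \<le> M" for x using u_nonneg[OF TinS[OF t], of x] u_bound[OF t, of x] by simp
  have Bge: "F w + D * (A m t - w) \<le> B m t" for m
  proof -
    define Bd where "Bd = \<bar>F w - D * w\<bar> + \<bar>D\<bar> * M + FM"
    have "Pk J m (\<lambda>x. (F w - D * w) + D * u x t) \<le> B m t" unfolding B_def
    proof (rule Pk_mono[where B=Bd])
      show "(\<lambda>x. (F w - D * w) + D * u x t) \<in> borel_measurable borel" using um by measurable
      show "(\<lambda>x. F (u x t)) \<in> borel_measurable borel" using Fu_meas[OF TinS[OF t]] .
      fix x
      have "\<bar>D * u x t\<bar> \<le> \<bar>D\<bar> * M" using ub[of x] by (simp add: abs_mult mult_left_mono)
      then show "\<bar>(F w - D * w) + D * u x t\<bar> \<le> Bd" unfolding Bd_def using FM_nonneg by linarith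
      show "\<bar>F (u x t)\<bar> \<le> Bd" unfolding Bd_def using Fu_bounds[OF t, of x] M_nonneg
        by (smt (verit) abs_ge_zero mult_nonneg_nonneg)
      show "(F w - D * w) + D * u x t \<le> F (u x t)"
        using D[of "u x t"] u_nonneg[OF TinS[OF t], of x] by (simp add: algebra_simps)
    qed
    moreover have "Pk J m (\<lambda>x. (F w - D * w) + D * u x t) = (F w - D * w) + D * A m t"
      unfolding A_def by (rule Pk_affine[where B=M]) (use um ub in auto)
    ultimately show ?thesis by (simp add: algebra_simps)
  qed
  have s1: "(\<lambda>m. c m t * (F w - D * w) + D * (c m t * A m t)) sums (1 * (F w - D * w) + D * W t)"
    by (intro sums_add sums_mult sums_mult2 c_sums) (use W_summable[OF t] in \<open>simp add: W_def summable_sums\<close>)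
  have s2: "(\<lambda>m. c m t * B m t) sums (\<Sum>m. c m t * B m t)"
    using cB_summable[OF t] by (simp add: summable_sums)
  have "1 * (F w - D * w) + D * W t \<le> (\<Sum>m. c m t * B m t)"
  proof (rule sums_le[OF _ s1 s2])
    fix m
    have "c m t * (F w + D * (A m t - w)) \<le> c m t * B m t"
      using Bge[of m] c_bounds[OF t, of m] by (intro mult_left_mono) auto
    then show "c m t * (F w - D * w) + D * (c m t * A m t) \<le> c m t * B m t"
      by (simp add: algebra_simps)
  qed
  then show ?thesis by (simp add: w_def)
qed

lemma W_deriv: "t \<in> {0<..<T} \<Longrightarrow> (W has_real_derivative (\<Sum>m. c m t * B m t)) (at t)"
proof -
  assume t0: "t \<in> {0<..<T}"
  then have t: "t \<in> {0..T}" by auto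
  define f' where "f' m s = (c m s - cp m s) * A m s + Pk J m (ud s) * c m s" for m s
  define N where "N m = (T ^ m / fact m + (if m = 0 then 0 else T ^ (m - 1) / fact (m - 1))) * M
      + (2 * M + FM) * (T ^ m / fact m)" for m
  have Nsum: "summable N" unfolding N_def
    by (intro summable_add summable_mult2 summable_mult summable_Tm summable_Tm')
  have f'b: "norm (f' m s) \<le> N m" if s: "s \<in> {0<..<T}" for m s
  proof -
    have s': "s \<in> {0..T}" using s by auto
    have cpb: "0 \<le> cp m s \<and> cp m s \<le> (if m = 0 then 0 else T ^ (m - 1) / fact (m - 1))"
      using c_bounds[OF s', of "m - 1"] by (auto simp: cp_def)
    have "\<bar>c m s - cp m s\<bar> \<le> T ^ m / fact m + (if m = 0 then 0 else T ^ (m - 1) / fact (m - 1))"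
      using c_bounds[OF s', of m] cpb by linarith
    then have 1: "\<bar>(c m s - cp m s) * A m s\<bar> \<le> (T ^ m / fact m + (if m = 0 then 0 else T ^ (m - 1) / fact (m - 1))) * M"
      using A_bounds[OF s', of m] by (simp add: abs_mult mult_mono)
    have "\<bar>Pk J m (ud s)\<bar> \<le> 2 * M + FM" unfolding Pk_ud[OF s']
      using A_bounds[OF s', of m] A_bounds[OF s', of "Suc m"] B_bounds[OF s', of m] by linarith
    then have "\<bar>Pk J m (ud s)\<bar> * c m s \<le> (2 * M + FM) * (T ^ m / fact m)"
      using c_bounds[OF s', of m] by (intro mult_mono) auto
    then have 2: "\<bar>Pk J m (ud s) * c m s\<bar> \<le> (2 * M + FM) * (T ^ m / fact m)"
      using c_bounds[OF s', of m] by (simp add: abs_mult)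
    show ?thesis using 1 2 abs_triangle_ineq[of "(c m s - cp m s) * A m s" "Pk J m (ud s) * c m s"] by (simp add: f'_def N_def)
  qed
  have der: "((\<lambda>s. c m s * A m s) has_field_derivative f' m s) (at s within {0<..<T})"
    if "s \<in> {0<..<T}" for m s
    unfolding f'_def
    by (rule has_field_derivative_at_within, rule DERIV_mult[OF c_deriv A_deriv[OF that]])
  have conv: "convex {0<..<T}" by (simp add: convex_real_interval)
  have tint: "t \<in> interior {0<..<T}"
    using t0 interior_open[OF open_greaterThanLessThan[of 0 T]] by simp
  have "((\<lambda>x. \<Sum>n. c n x * A n x) has_field_derivative (\<Sum>n. f' n t)) (at t)"
    by (rule has_field_derivative_series'(2)[OF conv der Weierstrass_m_test'[OF f'b Nsum] t0 W_summable[OF t]])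
      (use tint in auto)
  moreover have "(\<Sum>n. f' n t) = (\<Sum>m. c m t * B m t)"
  proof -
    define g where "g = (\<lambda>m. c m t * A (Suc m) t)"
    define h where "h = (\<lambda>m. cp m t * A m t)"
    have gs: "g sums (\<Sum>m. g m)" using cA_summable[OF t, of Suc] by (simp add: g_def summable_sums)
    have "(\<lambda>m. h (Suc m)) = g" by (simp add: h_def g_def cp_def)
    then have hs: "h sums (\<Sum>m. g m)" using gs sums_Suc_iff[of h "\<Sum>m. g m"] by (simp add: h_def cp_def)
    have bs: "(\<lambda>m. c m t * B m t) sums (\<Sum>m. c m t * B m t)"
      using cB_summable[OF t] by (simp add: summable_sums)
    have eq: "f' m t = g m - h m + c m t * B m t" for m
      by (simp add: f'_def g_def h_def Pk_ud[OF t] algebra_simps)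
    have "(\<lambda>m. g m - h m + c m t * B m t) sums ((\<Sum>m. g m) - (\<Sum>m. g m) + (\<Sum>m. c m t * B m t))"
      by (intro sums_add sums_diff gs hs bs)
    then show ?thesis unfolding eq[symmetric] by (simp add: sums_iff)
  qed
  ultimately show ?thesis by (simp add: W_def[abs_def])
qed

lemma W_mono0:
  assumes t: "t \<in> {0<..<T}"
  shows "W 0 \<le> W t"
proof (rule DERIV_nonneg_imp_increasing_open[of 0 t W])
  show "0 \<le> t" using t by simp
  show "continuous_on {0..t} W" by (rule continuous_on_subset[OF W_cont]) (use t in auto)
  fix x assume x: "0 < x" "x < t"
  then have x': "x \<in> {0<..<T}" using t by auto
  have "0 \<le> F (W x)" using F_nonneg W_bounds[of x] x' by auto
  then show "\<exists>y. (W has_real_derivative y) (at x) \<and> 0 \<le> y"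
    using W_deriv[OF x'] cB_ge[OF x'] by (intro exI[of _ "\<Sum>m. c m x * B m x"]) auto
qed

lemma blowup_contra:
  assumes ws: "ws > 0" "hfun F ws = ennreal T" and W0: "W 0 > ws"
  shows False
proof -
  define W0 where "W0 = W 0"
  note fH = final_H[OF ws W0[folded W0_def] T_pos]
  have Fpos: "F v > 0" if "v \<ge> W0" for v using fH(1) that by blast
  obtain K where K: "K < T" "\<And>b. b \<ge> W0 \<Longrightarrow> integral {W0..b} (\<lambda>u. 1 / F u) \<le> K"
    using fH(2) by blast
  have Wge: "W0 \<le> W t" if "t \<in> {0<..<T}" for t using W_mono0[OF that] by (simp add: W0_def)
  define b where "b = max M W0"
  have Wle: "W t \<le> b" if "t \<in> {0<..<T}" for t using W_bounds[of t] that by (auto simp: b_def)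
  have cF: "continuous_on {W0..b} (\<lambda>u. 1 / F u)"
    by (intro continuous_on_divide continuous_on_const continuous_on_subset[OF F_cont])
      (use Fpos ws W0 in \<open>force simp: W0_def\<close>)+
  define Phi where "Phi t = integral {W0..W t} (\<lambda>u. 1 / F u)" for t
  have Phi_der: "((\<lambda>x. Phi x - x) has_real_derivative (1 / F (W t) * (\<Sum>m. c m t * B m t) - 1)) (at t)"
    if t: "t \<in> {0<..<T}" for t
  proof -
    have d1: "((\<lambda>v. integral {W0..v} (\<lambda>u. 1 / F u)) has_real_derivative 1 / F (W t)) (at (W t) within {W0..b})"
      unfolding has_real_derivative_iff_has_vector_derivative
      by (rule integral_has_vector_derivative[OF cF]) (use Wge[OF t] Wle[OF t] in auto)
    have d2: "((\<lambda>v. integral {W0..v} (\<lambda>u. 1 / F u)) has_real_derivative 1 / F (W t)) (at (W t) within W ` {0<..<T})"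
      by (rule DERIV_subset[OF d1]) (use Wge Wle in auto)
    have d3: "(W has_real_derivative (\<Sum>m. c m t * B m t)) (at t within {0<..<T})"
      by (rule has_field_derivative_at_within[OF W_deriv[OF t]])
    have "((\<lambda>v. integral {W0..v} (\<lambda>u. 1 / F u)) \<circ> W has_real_derivative 1 / F (W t) * (\<Sum>m. c m t * B m t)) (at t within {0<..<T})"
      by (rule DERIV_image_chain[OF d2 d3])
    then have "(Phi has_real_derivative 1 / F (W t) * (\<Sum>m. c m t * B m t)) (at t)"
      using at_within_open[OF t open_greaterThanLessThan] by (simp add: Phi_def[abs_def] o_def)
    then show ?thesis by (intro derivative_eq_intros) auto
  qed
  have Phi_der_nn: "1 / F (W t) * (\<Sum>m. c m t * B m t) - 1 \<ge> 0" if t: "t \<in> {0<..<T}" for t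
  proof -
    have "F (W t) > 0" using Fpos Wge[OF t] by simp
    then show ?thesis using cB_ge[OF t] by (simp add: field_simps)
  qed
  have Phi_nn: "Phi s \<ge> 0" if s: "s \<in> {0<..<T}" for s
    unfolding Phi_def
  proof (rule integral_nonneg)
    show "(\<lambda>u. 1 / F u) integrable_on {W0..W s}"
      by (rule integrable_continuous_interval, rule continuous_on_subset[OF cF]) (use Wle[OF s] in auto)
    show "\<And>x. x \<in> {W0..W s} \<Longrightarrow> 0 \<le> 1 / F x" using Fpos by (auto simp: less_imp_le)
  qed
  have key: "t - s \<le> K" if st: "0 < s" "s < t" "t < T" for s t
  proof -
    have "Phi s - s \<le> Phi t - t"
    proof (rule DERIV_nonneg_imp_nondecreasing[of s t "\<lambda>x. Phi x - x"])
      show "s \<le> t" using st by simp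
      fix x assume "s \<le> x" "x \<le> t"
      then have x: "x \<in> {0<..<T}" using st by auto
      show "\<exists>y. ((\<lambda>x. Phi x - x) has_real_derivative y) (at x) \<and> 0 \<le> y"
        using Phi_der[OF x] Phi_der_nn[OF x] by blast
    qed
    moreover have "Phi s \<ge> 0" using Phi_nn st by simp
    moreover have "Phi t \<le> K" unfolding Phi_def using K(2) Wge st by simp
    ultimately show ?thesis by linarith
  qed
  define K' where "K' = max K 0"
  define t where "t = (K' + T) / 2"
  define s where "s = (t - K') / 2"
  have "K' < T" using K T_pos by (simp add: K'_def)
  then have "0 < s" "s < t" "t < T" using K T_pos by (auto simp: t_def s_def K'_def)
  from key[OF this] have "t - s \<le> K" .
  moreover have "t - s > K'" using \<open>K' < T\<close> unfolding t_def s_def by (simp add: field_simps)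
  ultimately show False by (simp add: K'_def)
qed

lemma kint_W: "kint J T (\<lambda>x. u x 0) = ennreal (W 0)"
proof -
  have t0: "(0::real) \<in> {0..T}" using T_pos by simp
  define X where "X n = T ^ Suc n / fact (Suc n) * A (Suc n) 0" for n
  have um: "(\<lambda>x. u x 0) \<in> borel_measurable borel" using u_meas[OF TinS[OF t0]] .
  have ub: "\<bar>u x 0\<bar> \<le> M" for x using u_nonneg[OF TinS[OF t0], of x] u_bound[OF t0, of x] by simp
  have int_eq: "(\<integral>\<^sup>+x. ennreal (Jconv J n x * u x 0) \<partial>lborel) = ennreal (A (Suc n) 0)" for n
  proof -
    have "(\<integral>\<^sup>+x. ennreal (Jconv J n x * u x 0) \<partial>lborel) = ennreal (\<integral>x. Jconv J n x * u x 0 \<partial>lborel)"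
      by (rule nn_integral_eq_integral[OF Jconv_mult_int[OF um ub]])
        (use Jconv_nonneg u_nonneg[OF TinS[OF t0]] in auto)
    then show ?thesis by (simp add: A_def Pk_def)
  qed
  have Xnn: "X n \<ge> 0" for n using A_bounds[OF t0] T_pos by (simp add: X_def)
  have Xsum: "summable X"
  proof (rule summable_comparison_test[OF _ summable_mult2[of "\<lambda>n. T ^ Suc n / fact (Suc n)" M]])
    show "summable (\<lambda>n. T ^ Suc n / fact (Suc n))"
      using summable_Tm summable_Suc_iff[of "\<lambda>n. T ^ n / fact n"] by simp
    show "\<exists>N. \<forall>n\<ge>N. norm (X n) \<le> T ^ Suc n / fact (Suc n) * M"
    proof (intro exI allI impI)
      fix n :: nat
      have "X n \<le> T ^ Suc n / fact (Suc n) * M" unfolding X_def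
        using A_bounds[OF t0, of "Suc n"] T_pos by (intro mult_left_mono) auto
      then show "norm (X n) \<le> T ^ Suc n / fact (Suc n) * M" using Xnn[of n] by simp
    qed
  qed
  have "(\<Sum>n. ennreal (T ^ Suc n / fact (Suc n)) * (\<integral>\<^sup>+x. ennreal (Jconv J n x * u x 0) \<partial>lborel))
      = (\<Sum>n. ennreal (X n))"
    unfolding int_eq X_def using T_pos by (simp add: ennreal_mult'[symmetric])
  also have "... = ennreal (\<Sum>n. X n)" by (rule suminf_ennreal2[OF Xnn Xsum])
  finally have "kint J T (\<lambda>x. u x 0) = ennreal (exp (- T)) * (ennreal (u 0 0) + ennreal (\<Sum>n. X n))"
    by (simp add: kint_def)
  also have "... = ennreal (exp (- T) * (u 0 0 + (\<Sum>n. X n)))"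
  proof -
    have a: "0 \<le> u 0 0" using u_nonneg[OF TinS[OF t0], of 0] .
    have b: "0 \<le> (\<Sum>n. X n)" using suminf_nonneg[OF Xsum Xnn] .
    show ?thesis
      unfolding ennreal_plus[OF a b, symmetric] ennreal_mult[OF exp_ge_zero add_nonneg_nonneg[OF a b], symmetric] ..
  qed
  also have "exp (- T) * (u 0 0 + (\<Sum>n. X n)) = W 0"
  proof -
    have sW: "summable (\<lambda>m. c m 0 * A m 0)" using W_summable[OF t0] .
    have "W 0 = c 0 0 * A 0 0 + (\<Sum>n. c (Suc n) 0 * A (Suc n) 0)"
      unfolding W_def using suminf_split_head[OF sW] by simp
    also have "(\<lambda>n. c (Suc n) 0 * A (Suc n) 0) = (\<lambda>n. exp (- T) * X n)"
      by (simp add: c_def X_def fun_eq_iff)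
    also have "(\<Sum>n. exp (- T) * X n) = exp (- T) * (\<Sum>n. X n)"
      by (rule suminf_mult[OF Xsum])
    finally show ?thesis by (simp add: c_def A_def Pk_def algebra_simps)
  qed
  finally show ?thesis .
qed

end

theorem theorem2p1:
  fixes J :: "'a::euclidean_space \<Rightarrow> real"
    and F :: "real \<Rightarrow> real"
    and u0 :: "'a \<Rightarrow> real"
    and T :: real
  assumes J_nonneg: "\<And>x. J x \<ge> 0"
    and J_radial: "\<And>x y. norm x = norm y \<Longrightarrow> J x = J y"
    and J_int: "integrable lborel J"
    and J_mass: "(\<integral>x. J x \<partial>lborel) = 1"
    and F_nonneg: "\<And>u. u \<ge> 0 \<Longrightarrow> F u \<ge> 0"
    and F_convex: "convex_on {0..} F"
    and F_C1: "\<exists>F'. (\<forall>u\<ge>0. (F has_real_derivative F' u) (at u within {0..})) \<and> continuous_on {0..} F'"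
    and F_zero: "F 0 = 0"
    and F_Osgood: "\<exists>a\<ge>0. hfun F a < \<infinity>"
    and u0_nonneg: "\<And>x. u0 x \<ge> 0"
    and T_pos: "T > 0"
    and blowup_cond: "kint J T u0 > ennreal (hinv F T)"
  shows "\<forall>S u. classical_solution J F u0 S u \<longrightarrow> S \<le> T"
proof (intro allI impI)
  fix S u assume cs: "classical_solution J F u0 S u"
  show "S \<le> T"
  proof (rule ccontr)
    assume "\<not> S \<le> T"
    then have TS: "T < S" by simp
    note csd = cs[unfolded classical_solution_def]
    have u_init: "\<And>x. u x 0 = u0 x" using csd by blast
    have u_cont: "continuous_on (UNIV \<times> {0..<S}) (\<lambda>(x, t). u x t)" using csd by blast
    have u_bdd: "bounded ((\<lambda>(x, t). u x t) ` (UNIV \<times> {0..T}))" using csd TS T_pos by auto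
    have u_nonneg: "\<And>x t. t \<in> {0..<S} \<Longrightarrow> 0 \<le> u x t" using csd by blast
    have u_der: "\<And>x t. t \<in> {0<..<S} \<Longrightarrow> ((\<lambda>s. u x s) has_real_derivative
       ((\<integral>y. J (x - y) * u y t \<partial>lborel) - u x t + F (u x t))) (at t)" using csd by blast
    obtain F' where F'1: "\<And>u. u \<ge> 0 \<Longrightarrow> (F has_real_derivative F' u) (at u within {0..})"
      and F'2: "continuous_on {0..} F'" using F_C1 by blast
    have fct: "fct F F'"
      by unfold_locales (use F_nonneg F_convex F'1 F'2 F_zero in auto)
    obtain M where M: "\<And>x t. t \<in> {0..T} \<Longrightarrow> \<bar>u x t\<bar> \<le> M"
      using u_bdd unfolding bounded_real by force
    obtain FM where FM: "\<And>v. v \<in> {0..M} \<Longrightarrow> F v \<le> FM"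
    proof -
      have "compact (F ` {0..M})"
        by (rule compact_continuous_image[OF continuous_on_subset[OF fct.F_cont[OF fct]]]) auto
      then have "bounded (F ` {0..M})" by (rule compact_imp_bounded)
      then obtain B where "\<forall>x\<in>F ` {0..M}. \<bar>x\<bar> \<le> B" unfolding bounded_real by blast
      then show ?thesis using that[of B] by force
    qed
    have J_meas: "J \<in> borel_measurable borel"
      using borel_measurable_integrable[OF J_int] by simp
    have J_one: "(\<integral>\<^sup>+x. ennreal (J x) \<partial>lborel) = 1"
      using nn_integral_eq_integral[OF J_int] J_nonneg J_mass by simp
    have J_sym: "\<And>x. J (- x) = J x" by (rule J_radial) simp
    interpret sl: sol J F F' u S T M FM
    proof unfold_locales
      show "\<And>x t. t \<in> {0..T} \<Longrightarrow> u x t \<le> M" using M by (meson abs_le_D1)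
    qed (use J_nonneg J_sym J_meas J_one F_nonneg F_convex F'1 F'2 F_zero T_pos TS u_cont u_nonneg FM u_der in auto)
    have "kint J T u0 = ennreal (sl.W 0)"
      using sl.kint_W u_init by (simp add: fun_eq_iff)
    obtain a0 where a0: "0 \<le> a0" "hfun F a0 < \<infinity>" using F_Osgood by blast
    note hp = fct.hinv_props[OF fct a0 T_pos]
    have "ennreal (hinv F T) < ennreal (sl.W 0)" using blowup_cond \<open>kint J T u0 = _\<close> by simp
    then have "hinv F T < sl.W 0" using hp(1) by (simp add: ennreal_less_iff)
    then show False by (rule sl.blowup_contra[OF hp])
  qed
qed

end
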